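(* Let $(\mathcal S,\mathcal A,P,r)$ be any finite MDP (general/multichain) and let $(g^\star,h^\star)$ be a solution of the modified Bellman equations. Let $V^0\in\mathbb R^n$ and let $V^k=\tfrac12 V^{k-1}+\tfrac12 TV^{k-1}$ for $k\ge 1$ (Relaxed Value Iteration with $\lambda_k=1/2$), and for each $k$ let $\pi_k$ be a greedy policy, i.e. $T^{\pi_k}V^k=TV^k$. Let $\mathcal D$ be the set of all deterministic policies and \[\epsilon=\inf_{\pi\in\mathcal D\setminus\{\pi\,:\,\mathcal P^{\pi}g^\star=g^\star\}}\|\mathcal P^{\pi}g^\star-g^\star\|_\infty\in(0,\infty],\] with the convention $\epsilon=+\infty$ if the index set is empty, and let $K=\big(2\|r\|_\infty+4\|V^0\|_\infty+16\|V^0-h^\star\|_\infty+2\|g^\star\|_\infty\big)/\epsilon$. Then for every $k>K$, \[\|g^\star-g^{\pi_k}\|_\infty\le\|TV^k-V^k-g^\star\|_\infty\le\frac{4\|V^0-h^\star\|_\infty}{\sqrt{\varpi\,(k-K)}},\] where $\varpi=3.141592\ldots$ is the circle constant.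
   Context: An MDP $(\mathcal S,\mathcal A,P,r)$ has finite state space $\mathcal S$ with $|\mathcal S|=n$ (functions on $\mathcal S$ are identified with vectors in $\mathbb R^n$), finite action space $\mathcal A$, transition probabilities $P(s'\mid s,a)$ and bounded reward $r:\mathcal S\times\mathcal A\to\mathbb R$, $\|r\|_\infty=\max_{s,a}|r(s,a)|$. A policy $\pi$ assigns to each state a distribution $\pi(\cdot\mid s)$ on $\mathcal A$; $r^\pi(s)=\sum_a\pi(a\mid s)r(s,a)$ and $\mathcal P^\pi(s,s')=\sum_a\pi(a\mid s)P(s'\mid s,a)$. The average reward of $\pi$ is $g^\pi(s)=\liminf_{T\to\infty}\frac1T\mathbb E_\pi[\sum_{t=0}^{T-1}r(s_t,a_t)\mid s_0=s]$ and $g^\star(s)=\max_\pi g^\pi(s)$. The Bellman consistency operator is $T^\pi V=r^\pi+\mathcal P^\pi V$ and the Bellman optimality operator is $(TV)(s)=\max_{a}\{r(s,a)+\sum_{s'}P(s'\mid s,a)V(s')\}$. A pair $(g,h)\in\mathbb R^n\times\mathbb R^n$ solves the modified Bellman equations if $\max_a\sum_{s'}P(s'\mid s,a)g(s')=g(s)$ and $\max_a\{r(s,a)+\sum_{s'}P(s'\mid s,a)h(s')\}=h(s)+g(s)$ for all $s$, and some policy attains both maxima simultaneously; solutions exist and the first component of any solution equals $g^\star$. A policy is deterministic if each $\pi(\cdot\mid s)$ is a point mass. *)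

theory Defs
  imports "HOL-Analysis.Analysis" "HOL-Library.Extended_Real"
begin

definition is_mdp :: "('s::finite \<Rightarrow> 'a::finite \<Rightarrow> 's \<Rightarrow> real) \<Rightarrow> bool" where
  "is_mdp P \<longleftrightarrow> (\<forall>s a s'. P s a s' \<ge> 0) \<and> (\<forall>s a. (\<Sum>s'\<in>UNIV. P s a s') = 1)"

definition is_policy :: "('s::finite \<Rightarrow> 'a::finite \<Rightarrow> real) \<Rightarrow> bool" where
  "is_policy pol \<longleftrightarrow> (\<forall>s a. pol s a \<ge> 0) \<and> (\<forall>s. (\<Sum>a\<in>UNIV. pol s a) = 1)"

definition det_policy :: "('s::finite \<Rightarrow> 'a::finite) \<Rightarrow> 's \<Rightarrow> 'a \<Rightarrow> real" where
  "det_policy d = (\<lambda>s a. if a = d s then 1 else 0)"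

definition r_pol :: "('s::finite \<Rightarrow> 'a::finite \<Rightarrow> real) \<Rightarrow> ('s \<Rightarrow> 'a \<Rightarrow> real) \<Rightarrow> 's \<Rightarrow> real" where
  "r_pol r pol = (\<lambda>s. \<Sum>a\<in>UNIV. pol s a * r s a)"

definition P_pol :: "('s::finite \<Rightarrow> 'a::finite \<Rightarrow> 's \<Rightarrow> real) \<Rightarrow> ('s \<Rightarrow> 'a \<Rightarrow> real) \<Rightarrow> 's \<Rightarrow> 's \<Rightarrow> real" where
  "P_pol P pol = (\<lambda>s s'. \<Sum>a\<in>UNIV. pol s a * P s a s')"

definition P_apply :: "('s::finite \<Rightarrow> 'a::finite \<Rightarrow> 's \<Rightarrow> real) \<Rightarrow> ('s \<Rightarrow> 'a \<Rightarrow> real) \<Rightarrow> ('s \<Rightarrow> real) \<Rightarrow> 's \<Rightarrow> real" where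
  "P_apply P pol V = (\<lambda>s. \<Sum>s'\<in>UNIV. P_pol P pol s s' * V s')"

definition T_pol :: "('s::finite \<Rightarrow> 'a::finite \<Rightarrow> 's \<Rightarrow> real) \<Rightarrow> ('s \<Rightarrow> 'a \<Rightarrow> real) \<Rightarrow> ('s \<Rightarrow> 'a \<Rightarrow> real) \<Rightarrow> ('s \<Rightarrow> real) \<Rightarrow> 's \<Rightarrow> real" where
  "T_pol P r pol V = (\<lambda>s. r_pol r pol s + P_apply P pol V s)"

definition T_opt :: "('s::finite \<Rightarrow> 'a::finite \<Rightarrow> 's \<Rightarrow> real) \<Rightarrow> ('s \<Rightarrow> 'a \<Rightarrow> real) \<Rightarrow> ('s \<Rightarrow> real) \<Rightarrow> 's \<Rightarrow> real" where
  "T_opt P r V = (\<lambda>s. Max (range (\<lambda>a. r s a + (\<Sum>s'\<in>UNIV. P s a s' * V s'))))"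

text \<open>Average reward: E_pol[r(s_t,a_t) | s_0 = s] = ((P^pol)^t r^pol)(s);
  g^pol(s) = liminf_T (1/T) sum_{t<T} of it (taken in ereal, finite since rewards are bounded).\<close>
definition avg_reward :: "('s::finite \<Rightarrow> 'a::finite \<Rightarrow> 's \<Rightarrow> real) \<Rightarrow> ('s \<Rightarrow> 'a \<Rightarrow> real) \<Rightarrow> ('s \<Rightarrow> 'a \<Rightarrow> real) \<Rightarrow> 's \<Rightarrow> real" where
  "avg_reward P r pol = (\<lambda>s. real_of_ereal (liminf (\<lambda>T::nat.
      ereal ((\<Sum>t<T. ((P_apply P pol ^^ t) (r_pol r pol)) s) / real T))))"

definition supnorm :: "('s::finite \<Rightarrow> real) \<Rightarrow> real" where
  "supnorm V = Max (range (\<lambda>s. \<bar>V s\<bar>))"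

definition rnorm :: "('s::finite \<Rightarrow> 'a::finite \<Rightarrow> real) \<Rightarrow> real" where
  "rnorm r = Max (range (\<lambda>(s,a). \<bar>r s a\<bar>))"

definition modified_bellman :: "('s::finite \<Rightarrow> 'a::finite \<Rightarrow> 's \<Rightarrow> real) \<Rightarrow> ('s \<Rightarrow> 'a \<Rightarrow> real) \<Rightarrow> ('s \<Rightarrow> real) \<Rightarrow> ('s \<Rightarrow> real) \<Rightarrow> bool" where
  "modified_bellman P r g h \<longleftrightarrow>
     (\<forall>s. Max (range (\<lambda>a. \<Sum>s'\<in>UNIV. P s a s' * g s')) = g s) \<and>
     (\<forall>s. Max (range (\<lambda>a. r s a + (\<Sum>s'\<in>UNIV. P s a s' * h s'))) = h s + g s) \<and>
     (\<exists>pol. is_policy pol \<and> (\<forall>s. P_apply P pol g s = g s) \<and>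
            (\<forall>s. r_pol r pol s + P_apply P pol h s = h s + g s))"

definition eps_gap :: "('s::finite \<Rightarrow> 'a::finite \<Rightarrow> 's \<Rightarrow> real) \<Rightarrow> ('s \<Rightarrow> real) \<Rightarrow> ereal" where
  "eps_gap P g = Inf ((\<lambda>d. ereal (supnorm (\<lambda>s. P_apply P (det_policy d) g s - g s)))
       ` {d. P_apply P (det_policy d) g \<noteq> g})"

end

theory Submission
  imports Defs
begin
definition Gw :: "nat \<Rightarrow> int \<Rightarrow> real" where
  "Gw N c = (\<Sum>b\<le>N. if int N < 2 * int b + c then real (N choose b) else 0) / 2^N"

lemma Gw_0: "Gw 0 c = (if 0 < c then 1 else 0)"
  by (simp add: Gw_def)

lemma Gw_Suc: "Gw (Suc N) c = (Gw N (c+1) + Gw N (c-1)) / 2"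
proof -
  define S where "S = (\<lambda>M c. (\<Sum>b\<le>M. if int M < 2 * int b + c then real (M choose b) else 0))"
  have h1: "S (Suc N) c = (if int (Suc N) < c then 1 else 0) +
      (\<Sum>b\<le>N. (if int N < 2 * int b + (c+1) then real (N choose b) else 0)
              + (if int (Suc N) < 2 * int (Suc b) + c then real (N choose Suc b) else 0))"
    unfolding S_def
    by (simp only: sum.atMost_Suc_shift binomial_Suc_Suc) (auto simp: sum.distrib[symmetric] intro!: sum.cong)
  have h2: "(if int (Suc N) < c then 1 else 0) +
      (\<Sum>b\<le>N. (if int (Suc N) < 2 * int (Suc b) + c then real (N choose Suc b) else 0))
      = (\<Sum>b\<le>Suc N. (if int (Suc N) < 2 * int b + c then real (N choose b) else 0))"
    by (simp only: sum.atMost_Suc_shift[of _ N]) simp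
  also have "\<dots> = S N (c-1)"
    unfolding S_def by (subst sum.atMost_Suc) (auto simp: binomial_eq_0 intro!: sum.cong)
  finally have h3: "(if int (Suc N) < c then 1 else 0) +
      (\<Sum>b\<le>N. (if int (Suc N) < 2 * int (Suc b) + c then real (N choose Suc b) else 0)) = S N (c-1)" .
  have "S (Suc N) c = S N (c+1) + S N (c-1)"
    using h1 h3 unfolding S_def by (simp add: sum.distrib)
  moreover have GS: "\<And>M c. Gw M c = S M c / 2^M" by (simp add: Gw_def S_def)
  ultimately show ?thesis by (simp add: GS add_divide_distrib)
qed

lemma Gw_big: "int N < c \<Longrightarrow> Gw N c = 1"
  by (induction N arbitrary: c) (auto simp: Gw_0 Gw_Suc)

lemma half_lem: "x + w = 1 \<Longrightarrow> y + z = 1 \<Longrightarrow> (x+y)/2 + (z+w)/2 = (1::real)"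
  by (simp add: field_simps)

lemma Gw_sym: "Gw N c + Gw N (1 - c) = 1"
proof (induction N arbitrary: c)
  case 0 then show ?case by (simp add: Gw_0)
next
  case (Suc N)
  have a: "Gw N (c+1) + Gw N (1 - (c+1)) = 1" by (rule Suc)
  have b: "Gw N (c-1) + Gw N (1 - (c-1)) = 1" by (rule Suc)
  have e1: "1 - (c+1) = -c" "1 - (c-1) = 2 - c" "1 - c + 1 = 2 - c" "1 - c - 1 = -c" by simp_all
  show ?case unfolding Gw_Suc e1 by (rule half_lem[OF a[unfolded e1] b[unfolded e1]])
qed

lemma Gw_par: "odd (int N + c) \<Longrightarrow> Gw N c = Gw N (c+1)"
proof (induction N arbitrary: c)
  case 0 then show ?case by (auto simp: Gw_0)
next
  case (Suc N)
  have a: "Gw N (c+1) = Gw N (c+1+1)" using Suc.prems by (intro Suc.IH) simp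
  have b: "Gw N (c-1) = Gw N (c-1+1)" using Suc.prems by (intro Suc.IH) simp
  show ?case unfolding Gw_Suc using a b by (simp add: algebra_simps)
qed

lemma Gw_diff: "Gw (2*n+1) 2 - Gw (2*n+1) 1 = real ((2*n+1) choose n) / 2^(2*n+1)"
proof -
  have pt: "(if int (2*n+1) < 2 * int b + 2 then real ((2*n+1) choose b) else 0)
      - (if int (2*n+1) < 2 * int b + 1 then real ((2*n+1) choose b) else 0)
      = (if b = n then real ((2*n+1) choose b) else 0)" for b
  proof -
    have "int (2*n+1) < 2 * int b + 2 \<longleftrightarrow> n \<le> b" by linarith
    moreover have "int (2*n+1) < 2 * int b + 1 \<longleftrightarrow> n < b" by linarith
    ultimately show ?thesis by auto
  qed
  have "(\<Sum>b\<le>2*n+1. if int (2*n+1) < 2 * int b + 2 then real ((2*n+1) choose b) else 0)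
      - (\<Sum>b\<le>2*n+1. if int (2*n+1) < 2 * int b + 1 then real ((2*n+1) choose b) else 0)
      = (\<Sum>b\<le>2*n+1. if b = n then real ((2*n+1) choose b) else 0)"
    by (simp only: sum_subtractf[symmetric] pt)
  also have "\<dots> = real ((2*n+1) choose n)" by (simp only: sum.delta[OF finite_atMost]) simp
  finally have e: "(\<Sum>b\<le>2*n+1. if int (2*n+1) < 2 * int b + 2 then real ((2*n+1) choose b) else 0)
      - (\<Sum>b\<le>2*n+1. if int (2*n+1) < 2 * int b + 1 then real ((2*n+1) choose b) else 0)
      = real ((2*n+1) choose n)" .
  show ?thesis unfolding Gw_def using e by (simp only: diff_divide_distrib[symmetric])
qed

definition Af :: "nat \<Rightarrow> nat \<Rightarrow> real" where
  "Af m n = 2 * Gw (m+n+1) (int n - int m) - 1"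
definition Bf :: "nat \<Rightarrow> nat \<Rightarrow> real" where
  "Bf m n = 2 * Gw (m+n+1) (int n - int m + 2) - 1"

lemma Af_rec: "Af m (Suc n) = (Bf m n + Af m n) / 2"
  unfolding Af_def Bf_def
  using Gw_Suc[of "m+n+1" "int n - int m + 1"]
  by (simp add: algebra_simps)

lemma Bf_rec: "Bf (Suc m) n = (Af m n + Bf m n) / 2"
  unfolding Af_def Bf_def
  using Gw_Suc[of "m+n+1" "int n - int m + 1"]
  by (simp add: algebra_simps)

lemma Bf_0: "Bf 0 n = 1"
  unfolding Bf_def by (simp add: Gw_big)

lemma Gw_odd0: "Gw (2*m+1) 0 = 1/2"
proof -
  have "Gw (2*m+1) 0 = Gw (2*m+1) 1" using Gw_par[of "2*m+1" 0] by simp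
  moreover have "Gw (2*m+1) 1 + Gw (2*m+1) 0 = 1" using Gw_sym[of "2*m+1" 1] by simp
  ultimately show ?thesis by simp
qed

lemma Af_diag: "Af m m = 0"
proof -
  have e: "m + m + 1 = 2*m+1" "int m - int m = 0" by simp_all
  show ?thesis unfolding Af_def e Gw_odd0 by simp
qed

lemma Bf_diag: "Bf n n = real ((2*n+1) choose n) / 4^n"
proof -
  have s: "Gw (2*n+1) 1 = 1/2" using Gw_odd0[of n] Gw_par[of "2*n+1" 0] by simp
  have e: "n + n + 1 = 2*n+1" "int n - int n + 2 = 2" by simp_all
  have "Bf n n = 2 * Gw (2*n+1) 2 - 1" unfolding Bf_def e by (rule refl)
  also have "\<dots> = 2 * (Gw (2*n+1) 2 - Gw (2*n+1) 1)" using s by simp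
  also have "\<dots> = 2 * (real ((2*n+1) choose n) / 2^(2*n+1))" by (simp only: Gw_diff)
  also have "\<dots> = real ((2*n+1) choose n) / 4^n"
  proof -
    have p: "(2::real)^(2*n+1) = 2 * 4^n" by (simp add: power_mult)
    show ?thesis unfolding p by simp
  qed
  finally show ?thesis .
qed

lemma Gamma_half_int: "Gamma (real n + 3/2) * 2 = sqrt pi * fact (2*n+1) / (fact n * 4^n)"
proof (induction n)
  case 0
  have h: "(1/2::real) \<notin> \<int>\<^sub>\<le>\<^sub>0" by (auto dest: nonpos_Ints_nonpos)
  have "Gamma (3/2::real) = 1/2 * Gamma (1/2)"
    using Gamma_plus1[OF h] by simp
  then show ?case by (simp add: Gamma_one_half_real)
next
  case (Suc n)
  have nn: "real n + 3/2 \<notin> \<int>\<^sub>\<le>\<^sub>0"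
  proof
    assume "real n + 3/2 \<in> \<int>\<^sub>\<le>\<^sub>0"
    then have "real n + 3/2 \<le> 0" by (rule nonpos_Ints_nonpos)
    then show False by simp
  qed
  have g: "Gamma (real n + 1 + 3/2) = (real n + 3/2) * Gamma (real n + 3/2)"
    using Gamma_plus1[OF nn] by (simp add: add_ac)
  have f: "fact (2 * Suc n + 1) = (real (2*n+2) * real (2*n+3)) * (fact (2*n+1) :: real)"
    by (simp add: algebra_simps)
  have f2: "fact (Suc n) = real (Suc n) * (fact n :: real)" by simp
  have aux: "\<And>G s F a b x. G*2 = s*F/(a*b) \<Longrightarrow> a > 0 \<Longrightarrow> b > 0 \<Longrightarrow> x \<ge> 0 \<Longrightarrow>
      (x+3/2)*G*2 = s*(((2*x+2)*(2*x+3))*F)/(((x+1)*a)*(4*b)::real)"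
  proof -
    fix G s F a b x :: real
    assume h: "G*2 = s*F/(a*b)" "a > 0" "b > 0" "x \<ge> 0"
    have x1: "x + 1 \<noteq> 0" using h by simp
    have "s*(((2*x+2)*(2*x+3))*F)/(((x+1)*a)*(4*b)) = ((x+1)*(s*(4*(x+3/2))*F))/((x+1)*(a*(4*b)))"
      by (simp add: algebra_simps)
    also have "\<dots> = (s*(4*(x+3/2))*F)/(a*(4*b))"
      using x1 by (rule nonzero_mult_divide_mult_cancel_left)
    also have "\<dots> = (s*F/(a*b)) * (x + 3/2)"
      using h by (simp add: field_simps)
    finally have "s*(((2*x+2)*(2*x+3))*F)/(((x+1)*a)*(4*b)) = (s*F/(a*b)) * (x + 3/2)" .
    then show "(x+3/2)*G*2 = s*(((2*x+2)*(2*x+3))*F)/(((x+1)*a)*(4*b))"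
    proof -
      assume E: "s*(((2*x+2)*(2*x+3))*F)/(((x+1)*a)*(4*b)) = (s*F/(a*b)) * (x + 3/2)"
      have "(x+3/2)*G*2 = (G*2)*(x+3/2)" by (simp add: ac_simps)
      also have "\<dots> = (s*F/(a*b))*(x+3/2)" using h(1) by simp
      finally show ?thesis using E by simp
    qed
  qed
  have e: "real (2*n+2) = 2*real n+2" "real (2*n+3) = 2*real n+3" "real (Suc n) = real n + 1"
    "(4::real)^Suc n = 4 * 4^n" by simp_all
  show ?case unfolding e g f f2
    by (rule aux[OF Suc.IH]) auto
qed

lemma Bf_fact: "Bf n n = fact (2*n+1) / (fact n * fact (n+1) * 4^n)"
proof -
  have "real ((2*n+1) choose n) = fact (2*n+1) / (fact n * fact (2*n+1-n))"
    by (rule binomial_fact) simp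
  moreover have "2*n+1-n = n+1" by simp
  ultimately show ?thesis unfolding Bf_diag by simp
qed

lemma Bf_bound: "Bf n n \<le> 2 / sqrt (pi * (real n + 1))"
proof -
  have cv: "(ln \<circ> Gamma) ((1 - 1/2) *\<^sub>R (real n + 1) + (1/2) *\<^sub>R (real n + 2))
       \<le> (1 - 1/2) * (ln \<circ> Gamma) (real n + 1) + (1/2) * (ln \<circ> Gamma) (real n + 2)"
    by (rule convex_onD[OF log_convex_Gamma_real]) auto
  have m: "(1 - 1/2) *\<^sub>R (real n + 1) + (1/2) *\<^sub>R (real n + 2) = real n + 3/2" by (simp add: field_simps)
  have p1: "Gamma (real n + 1) > 0" "Gamma (real n + 2) > 0" "Gamma (real n + 3/2) > 0"
    by (auto intro!: Gamma_real_pos)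
  have "ln (Gamma (real n + 3/2)) \<le> (ln (Gamma (real n + 1)) + ln (Gamma (real n + 2))) / 2"
    using cv unfolding m by simp
  also have "\<dots> = ln (Gamma (real n + 1) * Gamma (real n + 2)) / 2"
  proof -
    have nz: "Gamma (real n + 1) \<noteq> 0" "Gamma (real n + 2) \<noteq> 0" by (metis p1(1) less_irrefl) (metis p1(2) less_irrefl)
    show ?thesis by (simp add: ln_mult nz)
  qed
  also have "\<dots> = ln (sqrt (Gamma (real n + 1) * Gamma (real n + 2)))"
    using p1 by (subst ln_sqrt) auto
  finally have "Gamma (real n + 3/2) \<le> sqrt (Gamma (real n + 1) * Gamma (real n + 2))"
    using p1 by (simp add: ln_le_cancel_iff)
  moreover have "Gamma (real n + 1) = fact n" using Gamma_fact[of n] by (simp add: add_ac)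
  moreover have "Gamma (real n + 2) = fact (n+1)" using Gamma_fact[of "n+1"] by (simp add: add_ac)
  ultimately have G: "Gamma (real n + 3/2) \<le> sqrt (fact n * fact (n+1))" by simp
  have fn: "(fact (n+1) :: real) = (real n + 1) * fact n" by simp
  have fpos: "(fact n :: real) > 0" by simp
  have sq: "sqrt ((fact n :: real) * fact (n+1)) = fact n * sqrt (real n + 1)"
    unfolding fn using fpos by (simp add: real_sqrt_mult)
  have "Bf n n = 2 * Gamma (real n + 3/2) / (sqrt pi * fact (n+1))"
  proof -
    have aux: "\<And>G s F X y. G*2 = s*F/X \<Longrightarrow> s > 0 \<Longrightarrow> X > 0 \<Longrightarrow> y > 0 \<Longrightarrow>
       F/(X*y) = 2*G/(s*y::real)"
      by (simp add: field_simps)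
    have r: "(fact n :: real) * fact (n+1) * 4^n = (fact n * 4^n) * fact(n+1)" by (simp add: ac_simps)
    show ?thesis unfolding Bf_fact r
      by (rule aux[OF Gamma_half_int[of n]]) auto
  qed
  also have "\<dots> \<le> 2 * (fact n * sqrt (real n + 1)) / (sqrt pi * fact (n+1))"
    using G sq by (intro divide_right_mono mult_left_mono) auto
  also have "\<dots> = 2 / sqrt (pi * (real n + 1))"
  proof -
    define q where "q = sqrt (real n + 1)"
    have q: "q > 0" "q * q = real n + 1" unfolding q_def by simp_all
    have sp: "sqrt pi > 0" by simp
    have aux: "\<And>f q s. f > 0 \<Longrightarrow> q > 0 \<Longrightarrow> s > 0 \<Longrightarrow> 2*(f*q)/(s*((q*q)*f)) = 2/(s*(q::real))"
      by (simp add: field_simps)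
    have "2 * (fact n * sqrt (real n + 1)) / (sqrt pi * fact (n+1)) = 2*(fact n*q)/(sqrt pi*((q*q)*fact n))"
      unfolding fn q(2) q_def by simp
    also have "\<dots> = 2/(sqrt pi * q)" using aux[OF fpos q(1) sp] .
    also have "\<dots> = 2 / sqrt (pi * (real n + 1))" unfolding q_def by (simp add: real_sqrt_mult)
    finally show ?thesis .
  qed
  finally show ?thesis .
qed

lemma supnorm_ge: "\<bar>V s\<bar> \<le> supnorm V"
  unfolding supnorm_def by (rule Max_ge) auto

lemma supnorm_le: "(\<And>s. \<bar>V s\<bar> \<le> c) \<Longrightarrow> supnorm V \<le> c"
  unfolding supnorm_def by (subst Max_le_iff) auto

lemma supnorm_nonneg: "0 \<le> supnorm V"
  using supnorm_ge[of V] abs_ge_zero order_trans by blast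

lemma half_comb:
  fixes e a b A B :: real
  assumes "e = a/2 + b/2" "\<bar>a\<bar> \<le> A" "\<bar>b\<bar> \<le> B"
  shows "\<bar>e\<bar> \<le> (A + B)/2"
proof -
  have "\<bar>e\<bar> \<le> \<bar>a/2\<bar> + \<bar>b/2\<bar>" unfolding assms(1) by (rule abs_triangle_ineq)
  also have "\<dots> = \<bar>a\<bar>/2 + \<bar>b\<bar>/2" by simp
  also have "\<dots> \<le> A/2 + B/2" using assms(2,3) by (intro add_mono divide_right_mono) auto
  finally show ?thesis by (simp add: add_divide_distrib)
qed

lemma KM:
  fixes F :: "('s::finite \<Rightarrow> real) \<Rightarrow> ('s \<Rightarrow> real)" and x :: "nat \<Rightarrow> 's \<Rightarrow> real"
  assumes ne: "\<And>U W s. \<bar>F U s - F W s\<bar> \<le> supnorm (\<lambda>s. U s - W s)"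
    and fx: "F xs = xs"
    and rec: "\<And>i s. x (Suc i) s = x i s / 2 + F (x i) s / 2"
  shows "supnorm (\<lambda>s. F (x n) s - x n s) \<le> 2 * supnorm (\<lambda>s. x 0 s - xs s) * Bf n n"
proof -
  define D where "D = supnorm (\<lambda>s. x 0 s - xs s)"
  define R where "R = 2 * D"
  have bnd: "\<bar>x i s - xs s\<bar> \<le> D" for i s
  proof (induction i arbitrary: s)
    case 0 then show ?case unfolding D_def by (rule supnorm_ge)
  next
    case (Suc i)
    have "\<bar>F (x i) s - F xs s\<bar> \<le> D"
      by (rule order_trans[OF ne]) (rule supnorm_le, rule Suc.IH)
    moreover have "x (Suc i) s - xs s = (x i s - xs s)/2 + (F (x i) s - F xs s)/2"
      using rec[of i s] fx by (simp add: field_simps)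
    ultimately show ?case using Suc.IH[of s] by (auto simp: abs_le_iff field_simps; linarith)
  qed
  have bndx: "supnorm (\<lambda>t. xs t - x i t) \<le> D" for i
    by (rule supnorm_le) (metis abs_minus_commute bnd)
  have main: "\<forall>m n. m + n = k \<longrightarrow> m \<le> n \<longrightarrow>
      (\<forall>t. \<bar>x m t - x n t\<bar> \<le> R * Af m n) \<and> (\<forall>t. \<bar>x m t - F (x n) t\<bar> \<le> R * Bf m n)" for k
  proof (induction k)
    case 0
    have "\<bar>x 0 t - F (x 0) t\<bar> \<le> R * Bf 0 0" for t
    proof -
      have "\<bar>x 0 t - xs t\<bar> \<le> D" by (rule bnd)
      moreover have "\<bar>F xs t - F (x 0) t\<bar> \<le> D" by (rule order_trans[OF ne bndx])
      ultimately show ?thesis unfolding R_def Bf_0 using fx by (auto simp: abs_le_iff field_simps; linarith)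
    qed
    then show ?case by (auto simp: Af_diag)
  next
    case (Suc k)
    show ?case
    proof (intro allI impI conjI)
      fix m n t assume mn: "m + n = Suc k" "m \<le> n"
      show "\<bar>x m t - x n t\<bar> \<le> R * Af m n"
      proof (cases "m = n")
        case True then show ?thesis by (simp add: Af_diag)
      next
        case False
        then obtain n' where n': "n = Suc n'" "m \<le> n'" using mn by (cases n) auto
        have "m + n' = k" using mn n' by simp
        with Suc.IH n' have ih: "\<bar>x m t - x n' t\<bar> \<le> R * Af m n'" "\<bar>x m t - F (x n') t\<bar> \<le> R * Bf m n'"
          by blast+
        have "x m t - x n t = (x m t - x n' t)/2 + (x m t - F (x n') t)/2"
          using rec[of n' t] n' by (simp add: field_simps)
        from half_comb[OF this ih]
        show ?thesis unfolding n' Af_rec by (simp add: algebra_simps add_divide_distrib)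
      qed
    next
      fix m n t assume mn: "m + n = Suc k" "m \<le> n"
      show "\<bar>x m t - F (x n) t\<bar> \<le> R * Bf m n"
      proof (cases m)
        case 0
        have "\<bar>x 0 t - xs t\<bar> \<le> D" by (rule bnd)
        moreover have "\<bar>F xs t - F (x n) t\<bar> \<le> D" by (rule order_trans[OF ne bndx])
        ultimately show ?thesis unfolding R_def 0 Bf_0 using fx by (auto simp: abs_le_iff field_simps; linarith)
      next
        case (Suc m')
        have "m' + n = k" "m' \<le> n" using mn Suc by auto
        with Suc.IH have ih: "\<bar>x m' t - x n t\<bar> \<le> R * Af m' n" "\<bar>x m' t - F (x n) t\<bar> \<le> R * Bf m' n"
          by blast+
        have ih2: "supnorm (\<lambda>t. x m' t - x n t) \<le> R * Af m' n"
          using Suc.IH \<open>m' + n = k\<close> \<open>m' \<le> n\<close> by (intro supnorm_le) blast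
        have "\<bar>F (x m') t - F (x n) t\<bar> \<le> R * Af m' n" by (rule order_trans[OF ne ih2])
        moreover have "x m t - F (x n) t = (x m' t - F (x n) t)/2 + (F (x m') t - F (x n) t)/2"
          using rec[of m' t] Suc by (simp add: field_simps)
        ultimately have "\<bar>x m t - F (x n) t\<bar> \<le> (R * Bf m' n + R * Af m' n)/2"
          using half_comb ih(2) by blast
        then show ?thesis unfolding Suc Bf_rec by (simp add: algebra_simps add_divide_distrib)
      qed
    qed
  qed
  have "\<bar>F (x n) t - x n t\<bar> \<le> R * Bf n n" for t
    using main[of "n+n"] by (metis abs_minus_commute order_refl)
  then show ?thesis unfolding R_def D_def by (intro supnorm_le) (simp add: mult.assoc)
qed

lemma max_diff:
  fixes f g :: "'b \<Rightarrow> real"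
  assumes "finite A" "A \<noteq> {}" "\<And>a. a \<in> A \<Longrightarrow> \<bar>f a - g a\<bar> \<le> c"
  shows "\<bar>Max (f ` A) - Max (g ` A)\<bar> \<le> c"
proof -
  have "Max (f ` A) \<in> f ` A" using assms by (intro Max_in) auto
  then obtain a1 where a1: "a1 \<in> A" "Max (f ` A) = f a1" by auto
  have "Max (g ` A) \<in> g ` A" using assms by (intro Max_in) auto
  then obtain a2 where a2: "a2 \<in> A" "Max (g ` A) = g a2" by auto
  have "g a1 \<le> Max (g ` A)" using a1 assms by (intro Max_ge) auto
  moreover have "f a2 \<le> Max (f ` A)" using a2 assms by (intro Max_ge) auto
  moreover have "\<bar>f a1 - g a1\<bar> \<le> c" "\<bar>f a2 - g a2\<bar> \<le> c" using assms a1 a2 by auto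
  ultimately show ?thesis using a1 a2 by (auto simp: abs_le_iff)
qed

locale mdp_ctx =
  fixes P :: "'s::finite \<Rightarrow> 'a::finite \<Rightarrow> 's \<Rightarrow> real"
    and r :: "'s \<Rightarrow> 'a \<Rightarrow> real"
    and gs hs :: "'s \<Rightarrow> real"
  assumes mdp: "is_mdp P"
    and sol: "modified_bellman P r gs hs"
begin

definition Q :: "('s \<Rightarrow> real) \<Rightarrow> 's \<Rightarrow> 'a \<Rightarrow> real" where
  "Q V s a = r s a + (\<Sum>s'\<in>UNIV. P s a s' * V s')"
definition PG :: "'s \<Rightarrow> 'a \<Rightarrow> real" where
  "PG s a = (\<Sum>s'\<in>UNIV. P s a s' * gs s')"
definition Tstar :: "('s \<Rightarrow> real) \<Rightarrow> 's \<Rightarrow> real" where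
  "Tstar W s = Max ((\<lambda>a. Q W s a) ` {a. PG s a = gs s})"

lemma P_nonneg: "P s a s' \<ge> 0" using mdp unfolding is_mdp_def by auto
lemma P_sum: "(\<Sum>s'\<in>UNIV. P s a s') = 1" using mdp unfolding is_mdp_def by auto

lemma stoch_bound:
  assumes "\<And>s'. \<bar>W s'\<bar> \<le> c"
  shows "\<bar>\<Sum>s'\<in>UNIV. P s a s' * W s'\<bar> \<le> c"
proof -
  have "\<bar>\<Sum>s'\<in>UNIV. P s a s' * W s'\<bar> \<le> (\<Sum>s'\<in>UNIV. \<bar>P s a s' * W s'\<bar>)" by (rule sum_abs)
  also have "\<dots> \<le> (\<Sum>s'\<in>UNIV. P s a s' * c)"
    using assms P_nonneg by (intro sum_mono) (simp add: abs_mult mult_left_mono)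
  also have "\<dots> = c" using P_sum by (simp add: sum_distrib_right[symmetric])
  finally show ?thesis .
qed

lemma T_opt_ge: "Q V s a \<le> T_opt P r V s"
  unfolding T_opt_def Q_def by (rule Max_ge) auto

lemma T_opt_ex: "\<exists>a. T_opt P r V s = Q V s a"
proof -
  have "T_opt P r V s \<in> range (\<lambda>a. Q V s a)"
    unfolding T_opt_def Q_def by (rule Max_in) auto
  then show ?thesis by auto
qed

lemma Q_diff: "Q V s a - Q U s a = (\<Sum>s'\<in>UNIV. P s a s' * (V s' - U s'))"
  unfolding Q_def by (simp add: sum_subtractf right_diff_distrib)

lemma Q_nonexp: "(\<And>s'. \<bar>V s' - U s'\<bar> \<le> c) \<Longrightarrow> \<bar>Q V s a - Q U s a\<bar> \<le> c"
  unfolding Q_diff by (rule stoch_bound)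

lemma T_opt_nonexp:
  assumes "\<And>s'. \<bar>V s' - U s'\<bar> \<le> c"
  shows "\<bar>T_opt P r V s - T_opt P r U s\<bar> \<le> c"
proof -
  have "\<bar>Max ((\<lambda>a. Q V s a) ` UNIV) - Max ((\<lambda>a. Q U s a) ` UNIV)\<bar> \<le> c"
    by (rule max_diff) (auto intro: Q_nonexp assms)
  then show ?thesis unfolding T_opt_def Q_def by simp
qed

lemma PG_le: "PG s a \<le> gs s"
proof -
  have "Max (range (\<lambda>a. \<Sum>s'\<in>UNIV. P s a s' * gs s')) = gs s" using sol unfolding modified_bellman_def by auto
  moreover have "PG s a \<le> Max (range (\<lambda>a. \<Sum>s'\<in>UNIV. P s a s' * gs s'))" unfolding PG_def by (rule Max_ge) auto
  ultimately show ?thesis by simp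
qed

lemma Qh_le: "Q hs s a \<le> hs s + gs s"
proof -
  have "Max (range (\<lambda>a. r s a + (\<Sum>s'\<in>UNIV. P s a s' * hs s'))) = hs s + gs s"
    using sol unfolding modified_bellman_def by auto
  moreover have "Q hs s a \<le> Max (range (\<lambda>a. r s a + (\<Sum>s'\<in>UNIV. P s a s' * hs s')))"
    unfolding Q_def by (rule Max_ge) auto
  ultimately show ?thesis by simp
qed

lemma P_apply_eq: "P_apply P pol V s = (\<Sum>a\<in>UNIV. pol s a * (\<Sum>s'\<in>UNIV. P s a s' * V s'))"
proof -
  have "P_apply P pol V s = (\<Sum>s'\<in>UNIV. \<Sum>a\<in>UNIV. pol s a * P s a s' * V s')"
    unfolding P_apply_def P_pol_def by (simp add: sum_distrib_right)
  also have "\<dots> = (\<Sum>a\<in>UNIV. \<Sum>s'\<in>UNIV. pol s a * P s a s' * V s')" by (rule sum.swap)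
  also have "\<dots> = (\<Sum>a\<in>UNIV. pol s a * (\<Sum>s'\<in>UNIV. P s a s' * V s'))"
    by (simp add: sum_distrib_left mult.assoc)
  finally show ?thesis .
qed

lemma T_pol_eq: "T_pol P r pol V s = (\<Sum>a\<in>UNIV. pol s a * Q V s a)"
  unfolding T_pol_def r_pol_def P_apply_eq Q_def by (simp add: sum.distrib distrib_left)

lemma good_ex: "\<exists>a. PG s a = gs s \<and> Q hs s a = hs s + gs s"
proof -
  obtain pol where pol: "is_policy pol" "\<And>s. P_apply P pol gs s = gs s"
    "\<And>s. r_pol r pol s + P_apply P pol hs s = hs s + gs s"
    using sol unfolding modified_bellman_def by blast
  have pn: "\<And>a. pol s a \<ge> 0" and ps: "(\<Sum>a\<in>UNIV. pol s a) = 1" using pol(1) unfolding is_policy_def by auto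
  have e1: "(\<Sum>a\<in>UNIV. pol s a * PG s a) = gs s" using pol(2)[of s] unfolding P_apply_eq PG_def .
  have e2: "(\<Sum>a\<in>UNIV. pol s a * Q hs s a) = hs s + gs s"
    using pol(3)[of s] unfolding T_pol_eq[symmetric] T_pol_def .
  define f where "f a = pol s a * ((gs s - PG s a) + (hs s + gs s - Q hs s a))" for a
  have fn: "\<And>a. f a \<ge> 0" unfolding f_def using pn PG_le Qh_le by (intro mult_nonneg_nonneg add_nonneg_nonneg) auto
  have "(\<Sum>a\<in>UNIV. f a) = (\<Sum>a\<in>UNIV. pol s a) * (gs s + (hs s + gs s))
         - (\<Sum>a\<in>UNIV. pol s a * PG s a) - (\<Sum>a\<in>UNIV. pol s a * Q hs s a)"
    unfolding f_def by (simp add: algebra_simps sum.distrib sum_subtractf sum_distrib_left sum_distrib_right)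
  also have "\<dots> = 0" using e1 e2 ps by simp
  finally have f0: "\<And>a. f a = 0" using fn by (subst (asm) sum_nonneg_eq_0_iff) auto
  have "\<exists>a. pol s a > 0"
  proof (rule ccontr)
    assume "\<not> (\<exists>a. pol s a > 0)"
    then have "\<forall>a. pol s a = 0" using pn by (meson antisym not_less)
    then show False using ps by simp
  qed
  then obtain a where a: "pol s a > 0" by blast
  have "(gs s - PG s a) + (hs s + gs s - Q hs s a) = 0" using f0[of a] a unfolding f_def by simp
  moreover have "gs s - PG s a \<ge> 0" "hs s + gs s - Q hs s a \<ge> 0" using PG_le Qh_le by auto
  ultimately show ?thesis by (intro exI[of _ a]) auto
qed

lemma Tstar_ne: "{a. PG s a = gs s} \<noteq> {}"
proof -
  obtain a where "PG s a = gs s" using good_ex[of s] by blast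
  then show ?thesis by blast
qed

lemma Tstar_nonexp:
  assumes "\<And>s'. \<bar>V s' - U s'\<bar> \<le> c"
  shows "\<bar>Tstar V s - Tstar U s\<bar> \<le> c"
  unfolding Tstar_def by (rule max_diff) (use Tstar_ne[of s] in \<open>auto intro: Q_nonexp assms\<close>)

lemma Tstar_shift: "Tstar (\<lambda>s. W s + c * gs s) s = Tstar W s + c * gs s"
proof -
  have "(\<lambda>a. Q (\<lambda>s. W s + c * gs s) s a) ` {a. PG s a = gs s} = (\<lambda>a. Q W s a + c * gs s) ` {a. PG s a = gs s}"
  proof (rule image_cong[OF refl])
    fix a assume "a \<in> {a. PG s a = gs s}"
    then have "PG s a = gs s" by simp
    have e: "(\<Sum>s'\<in>UNIV. P s a s' * (W s' + c * gs s')) = (\<Sum>s'\<in>UNIV. P s a s' * W s') + c * (\<Sum>s'\<in>UNIV. P s a s' * gs s')"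
      by (simp add: distrib_left sum.distrib sum_distrib_left algebra_simps)
    show "Q (\<lambda>s. W s + c * gs s) s a = Q W s a + c * gs s"
      using \<open>PG s a = gs s\<close> unfolding Q_def PG_def e by simp
  qed
  then show ?thesis unfolding Tstar_def using Tstar_ne[of s] by (simp add: Max_add_commute)
qed

lemma Tstar_h: "Tstar hs s = hs s + gs s"
proof -
  obtain a where a: "PG s a = gs s" "Q hs s a = hs s + gs s" using good_ex by blast
  show ?thesis unfolding Tstar_def
  proof (rule Max_eqI)
    show "finite ((\<lambda>a. Q hs s a) ` {a. PG s a = gs s})" by simp
    show "\<And>y. y \<in> (\<lambda>a. Q hs s a) ` {a. PG s a = gs s} \<Longrightarrow> y \<le> hs s + gs s" using Qh_le by auto
    show "hs s + gs s \<in> (\<lambda>a. Q hs s a) ` {a. PG s a = gs s}" using a by force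
  qed
qed

end

context mdp_ctx begin

definition gap :: "'s \<Rightarrow> 'a \<Rightarrow> real" where "gap s a = gs s - PG s a"

lemma gap_nonneg: "gap s a \<ge> 0" unfolding gap_def using PG_le by simp

lemma P_apply_det: "P_apply P (det_policy d) V s = (\<Sum>s'\<in>UNIV. P s (d s) s' * V s')"
proof -
  have "P_apply P (det_policy d) V s = (\<Sum>a\<in>UNIV. (if a = d s then (\<Sum>s'\<in>UNIV. P s a s' * V s') else 0))"
    unfolding P_apply_eq det_policy_def by (intro sum.cong) auto
  also have "\<dots> = (\<Sum>s'\<in>UNIV. P s (d s) s' * V s')" by (simp add: sum.delta')
  finally show ?thesis .
qed

lemma eps_le_gap:
  assumes bad: "PG s a \<noteq> gs s"
  shows "eps_gap P gs \<le> ereal (gap s a)"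
proof -
  define a0 where "a0 s' = (SOME b. PG s' b = gs s' \<and> Q hs s' b = hs s' + gs s')" for s'
  have a0: "PG s' (a0 s') = gs s'" for s' unfolding a0_def using someI_ex[OF good_ex[of s']] by blast
  define d where "d = a0(s := a)"
  have Pd: "P_apply P (det_policy d) gs s' = PG s' (d s')" for s' unfolding P_apply_det PG_def ..
  have dA: "d \<in> {d. P_apply P (det_policy d) gs \<noteq> gs}"
  proof
    show "P_apply P (det_policy d) gs \<noteq> gs"
    proof
      assume "P_apply P (det_policy d) gs = gs"
      then have "P_apply P (det_policy d) gs s = gs s" by simp
      then show False using bad Pd[of s] unfolding d_def by simp
    qed
  qed
  have sn: "supnorm (\<lambda>s'. P_apply P (det_policy d) gs s' - gs s') = gap s a"
  proof (rule antisym)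
    show "supnorm (\<lambda>s'. P_apply P (det_policy d) gs s' - gs s') \<le> gap s a"
    proof (rule supnorm_le)
      fix s' show "\<bar>P_apply P (det_policy d) gs s' - gs s'\<bar> \<le> gap s a"
        unfolding Pd unfolding d_def using a0[of s'] PG_le[of s a] gap_nonneg[of s a]
        by (cases "s' = s") (auto simp: gap_def)
    qed
    have "\<bar>P_apply P (det_policy d) gs s - gs s\<bar> = gap s a"
      unfolding Pd unfolding d_def using PG_le[of s a] by (simp add: gap_def)
    then show "gap s a \<le> supnorm (\<lambda>s'. P_apply P (det_policy d) gs s' - gs s')"
      using supnorm_ge[of "\<lambda>s'. P_apply P (det_policy d) gs s' - gs s'" s] by simp
  qed
  show ?thesis unfolding eps_gap_def
    by (rule Inf_lower) (use dA sn in force)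
qed

lemma eps_inf:
  assumes "\<And>s a. PG s a = gs s"
  shows "eps_gap P gs = \<infinity>"
proof -
  have "{d. P_apply P (det_policy d) gs \<noteq> gs} = {}"
  proof -
    have "P_apply P (det_policy d) gs = gs" for d
      by (rule ext) (simp add: P_apply_det assms[unfolded PG_def])
    then show ?thesis by auto
  qed
  then show ?thesis unfolding eps_gap_def by (simp add: top_ereal_def)
qed

lemma eps_fin:
  assumes "PG s0 a0 \<noteq> gs s0"
  shows "\<exists>e>0. eps_gap P gs = ereal e \<and> (\<forall>s a. PG s a \<noteq> gs s \<longrightarrow> e \<le> gap s a)"
proof -
  define A where "A = {d. P_apply P (det_policy d) gs \<noteq> gs}"
  define R where "R = (\<lambda>d. supnorm (\<lambda>s. P_apply P (det_policy d) gs s - gs s)) ` A"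
  have fin: "finite R" unfolding R_def by simp
  have ne: "R \<noteq> {}"
  proof -
    define a1 where "a1 s' = (SOME b. PG s' b = gs s' \<and> Q hs s' b = hs s' + gs s')" for s'
    have a1: "PG s' (a1 s') = gs s'" for s' unfolding a1_def using someI_ex[OF good_ex[of s']] by blast
    have "P_apply P (det_policy (a1(s0 := a0))) gs s0 \<noteq> gs s0"
      using assms by (simp add: P_apply_det PG_def)
    then have "a1(s0 := a0) \<in> A" unfolding A_def by auto
    then show ?thesis unfolding R_def by auto
  qed
  have pos: "x > 0" if "x \<in> R" for x
  proof -
    have xi: "x \<in> (\<lambda>d. supnorm (\<lambda>s. P_apply P (det_policy d) gs s - gs s)) ` A"
      using that unfolding R_def .
    obtain d where d2: "x = supnorm (\<lambda>s. P_apply P (det_policy d) gs s - gs s)" and d1: "d \<in> A"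
      using xi by (rule imageE)
    note d = d1 d2
    have "x \<ge> 0" using d(2) supnorm_nonneg by simp
    moreover have "x \<noteq> 0"
    proof
      assume "x = 0"
      then have "\<bar>P_apply P (det_policy d) gs s - gs s\<bar> \<le> 0" for s
        using supnorm_ge[of "\<lambda>s. P_apply P (det_policy d) gs s - gs s" s] d(2) by simp
      then have "P_apply P (det_policy d) gs = gs" by (intro ext) (meson abs_le_zero_iff eq_iff_diff_eq_0)
      then show False using d(1) unfolding A_def by simp
    qed
    ultimately show ?thesis by simp
  qed
  define m where "m = Min R"
  have mpos: "m > 0" unfolding m_def using Min_in[OF fin ne] pos by blast
  have lo: "ereal m \<le> eps_gap P gs"
    unfolding eps_gap_def A_def[symmetric]
  proof (rule Inf_greatest)
    fix y assume "y \<in> (\<lambda>d. ereal (supnorm (\<lambda>s. P_apply P (det_policy d) gs s - gs s))) ` A"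
    then obtain d where "d \<in> A" "y = ereal (supnorm (\<lambda>s. P_apply P (det_policy d) gs s - gs s))" by auto
    moreover then have "supnorm (\<lambda>s. P_apply P (det_policy d) gs s - gs s) \<in> R" unfolding R_def by auto
    ultimately show "ereal m \<le> y" unfolding m_def using fin by simp
  qed
  have hi: "eps_gap P gs \<le> ereal (gap s0 a0)" by (rule eps_le_gap[OF assms])
  obtain e where e: "eps_gap P gs = ereal e" using lo hi by (cases "eps_gap P gs") auto
  show ?thesis
  proof (intro exI conjI allI impI)
    show "e > 0" using lo e mpos by simp
    show "eps_gap P gs = ereal e" by (rule e)
    fix s a assume "PG s a \<noteq> gs s"
    then show "e \<le> gap s a" using eps_le_gap[of s a] e by simp
  qed
qed

end

locale rvi = mdp_ctx P r gs hs
  for P :: "'s::finite \<Rightarrow> 'a::finite \<Rightarrow> 's \<Rightarrow> real" and r gs hs +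
  fixes V :: "nat \<Rightarrow> 's \<Rightarrow> real" and pols :: "nat \<Rightarrow> 's \<Rightarrow> 'a \<Rightarrow> real"
  assumes V_rec: "\<And>k. V (Suc k) = (\<lambda>s. (1/2) * V k s + (1/2) * T_opt P r (V k) s)"
    and pol: "\<And>k. is_policy (pols k)"
    and greedy: "\<And>k. T_pol P r (pols k) (V k) = T_opt P r (V k)"
begin

definition D0 where "D0 = supnorm (\<lambda>s. V 0 s - hs s)"
definition U :: "nat \<Rightarrow> 's \<Rightarrow> real" where "U j s = hs s + real j / 2 * gs s"

lemma D0_nonneg: "D0 \<ge> 0" unfolding D0_def by (rule supnorm_nonneg)

lemma Q_U: "Q (U j) s a = Q hs s a + real j / 2 * PG s a"
proof -
  have "(\<Sum>s'\<in>UNIV. P s a s' * U j s') = (\<Sum>s'\<in>UNIV. P s a s' * hs s') + real j / 2 * (\<Sum>s'\<in>UNIV. P s a s' * gs s')"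
    unfolding U_def by (simp add: distrib_left sum.distrib sum_distrib_left algebra_simps)
  then show ?thesis unfolding Q_def PG_def by simp
qed

lemma T_U: "T_opt P r (U j) s = hs s + gs s + real j / 2 * gs s"
proof (rule antisym)
  obtain a where a: "T_opt P r (U j) s = Q (U j) s a" using T_opt_ex by blast
  have "real j / 2 * PG s a \<le> real j / 2 * gs s" using PG_le by (intro mult_left_mono) auto
  then show "T_opt P r (U j) s \<le> hs s + gs s + real j / 2 * gs s"
    unfolding a Q_U using Qh_le[of s a] by linarith
  obtain a0 where a0: "PG s a0 = gs s" "Q hs s a0 = hs s + gs s" using good_ex by blast
  show "hs s + gs s + real j / 2 * gs s \<le> T_opt P r (U j) s"
    using T_opt_ge[of "U j" s a0] unfolding Q_U a0 by simp
qed

lemma dist: "\<bar>V j s - U j s\<bar> \<le> D0"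
proof (induction j arbitrary: s)
  case 0
  show ?case unfolding D0_def U_def using supnorm_ge[of "\<lambda>s. V 0 s - hs s" s] by simp
next
  case (Suc j)
  have e: "V (Suc j) s - U (Suc j) s = (V j s - U j s)/2 + (T_opt P r (V j) s - T_opt P r (U j) s)/2"
    unfolding V_rec T_U by (simp add: U_def field_simps)
  have "\<bar>T_opt P r (V j) s - T_opt P r (U j) s\<bar> \<le> D0" by (rule T_opt_nonexp) (rule Suc.IH)
  from half_comb[OF e Suc.IH this] show ?case by simp
qed

lemma bad_vs_good:
  assumes a0: "PG s a0 = gs s" "Q hs s a0 = hs s + gs s"
  shows "Q (V j) s a \<le> Q (V j) s a0 + 2 * D0 - real j / 2 * gap s a"
proof -
  have "\<bar>Q (V j) s a - Q (U j) s a\<bar> \<le> D0" by (rule Q_nonexp) (rule dist)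
  moreover have "\<bar>Q (V j) s a0 - Q (U j) s a0\<bar> \<le> D0" by (rule Q_nonexp) (rule dist)
  moreover have "Q (U j) s a = Q hs s a + real j / 2 * gs s - real j / 2 * gap s a"
    unfolding Q_U gap_def by (simp add: algebra_simps)
  moreover have "Q (U j) s a0 = hs s + gs s + real j / 2 * gs s" unfolding Q_U a0 by simp
  moreover note Qh_le[of s a]
  ultimately show ?thesis by (simp add: abs_le_iff)
qed

definition Good :: "nat \<Rightarrow> bool" where
  "Good j \<longleftrightarrow> (\<forall>s a. PG s a \<noteq> gs s \<longrightarrow> 4 * D0 \<le> real j * gap s a)"

lemma Good_mono: "Good j \<Longrightarrow> j \<le> j' \<Longrightarrow> Good j'"
  unfolding Good_def using gap_nonneg
  by (meson mult_right_mono of_nat_mono order_trans)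

lemma T_eq_Tstar:
  assumes "Good j"
  shows "T_opt P r (V j) s = Tstar (V j) s"
proof (rule antisym)
  obtain a0 where a0: "PG s a0 = gs s" "Q hs s a0 = hs s + gs s" using good_ex by blast
  have Ts_ge: "Q (V j) s b \<le> Tstar (V j) s" if "PG s b = gs s" for b
    unfolding Tstar_def using that by (intro Max_ge) auto
  obtain a where a: "T_opt P r (V j) s = Q (V j) s a" using T_opt_ex by blast
  show "T_opt P r (V j) s \<le> Tstar (V j) s"
  proof (cases "PG s a = gs s")
    case True then show ?thesis unfolding a by (rule Ts_ge)
  next
    case False
    then have "4 * D0 \<le> real j * gap s a" using assms unfolding Good_def by blast
    then have "Q (V j) s a \<le> Q (V j) s a0" using bad_vs_good[OF a0, of j a] by linarith
    then show ?thesis unfolding a using Ts_ge[OF a0(1)] by linarith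
  qed
  have "Tstar (V j) s \<in> (\<lambda>a. Q (V j) s a) ` {a. PG s a = gs s}"
    unfolding Tstar_def using Tstar_ne[of s] by (intro Max_in) auto
  then obtain b where "Tstar (V j) s = Q (V j) s b" by auto
  then show "Tstar (V j) s \<le> T_opt P r (V j) s" using T_opt_ge by simp
qed

lemma greedy_support:
  assumes strict: "\<And>s a. PG s a \<noteq> gs s \<Longrightarrow> 4 * D0 < real k * gap s a"
    and bad: "PG s a \<noteq> gs s"
  shows "pols k s a = 0"
proof -
  obtain a0 where a0: "PG s a0 = gs s" "Q hs s a0 = hs s + gs s" using good_ex by blast
  define M where "M = T_opt P r (V k) s"
  have pn: "\<And>b. pols k s b \<ge> 0" and ps: "(\<Sum>b\<in>UNIV. pols k s b) = 1"
    using pol[of k] unfolding is_policy_def by auto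
  have e: "(\<Sum>b\<in>UNIV. pols k s b * Q (V k) s b) = M"
    using greedy[of k] unfolding M_def by (metis T_pol_eq)
  define f where "f b = pols k s b * (M - Q (V k) s b)" for b
  have fn: "f b \<ge> 0" for b unfolding f_def M_def using pn T_opt_ge by (intro mult_nonneg_nonneg) auto
  have "(\<Sum>b\<in>UNIV. f b) = (\<Sum>b\<in>UNIV. pols k s b) * M - (\<Sum>b\<in>UNIV. pols k s b * Q (V k) s b)"
    unfolding f_def by (simp add: right_diff_distrib sum_subtractf sum_distrib_right)
  also have "\<dots> = 0" using e ps by simp
  finally have "f a = 0" using fn by (subst (asm) sum_nonneg_eq_0_iff) auto
  moreover have "Q (V k) s a < M"
  proof -
    have "Q (V k) s a < Q (V k) s a0" using bad_vs_good[OF a0, of k a] strict[OF bad] by linarith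
    also have "\<dots> \<le> M" unfolding M_def by (rule T_opt_ge)
    finally show ?thesis .
  qed
  ultimately show ?thesis unfolding f_def by simp
qed

lemma greedy_Pg:
  assumes strict: "\<And>s a. PG s a \<noteq> gs s \<Longrightarrow> 4 * D0 < real k * gap s a"
  shows "P_apply P (pols k) gs s = gs s"
proof -
  have "P_apply P (pols k) gs s = (\<Sum>a\<in>UNIV. pols k s a * PG s a)" unfolding P_apply_eq PG_def ..
  also have "\<dots> = (\<Sum>a\<in>UNIV. pols k s a * gs s)"
    by (rule sum.cong) (auto simp: greedy_support[OF strict])
  also have "\<dots> = gs s" using pol[of k] unfolding is_policy_def by (simp add: sum_distrib_right[symmetric])
  finally show ?thesis .
qed

end

context rvi begin

lemma rate:
  assumes Gm: "Good m" and mk: "m \<le> k"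
  shows "supnorm (\<lambda>s. T_opt P r (V k) s - V k s - gs s) \<le> 2 * D0 * Bf (k - m) (k - m)"
proof -
  define W where "W i s = V (m+i) s - real (m+i) / 2 * gs s" for i s
  define F where "F Y s = Tstar Y s - gs s" for Y s
  have VW: "V (m+i) = (\<lambda>s. W i s + real (m+i) / 2 * gs s)" for i by (rule ext) (simp add: W_def)
  have TV: "T_opt P r (V (m+i)) s = Tstar (W i) s + real (m+i) / 2 * gs s" for i s
  proof -
    have "T_opt P r (V (m+i)) s = Tstar (V (m+i)) s"
      by (rule T_eq_Tstar[OF Good_mono[OF Gm]]) simp
    also have "\<dots> = Tstar (W i) s + real (m+i) / 2 * gs s" unfolding VW by (rule Tstar_shift)
    finally show ?thesis .
  qed
  have ne: "\<bar>F Y1 s - F Y2 s\<bar> \<le> supnorm (\<lambda>s. Y1 s - Y2 s)" for Y1 Y2 s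
  proof -
    have "\<bar>Tstar Y1 s - Tstar Y2 s\<bar> \<le> supnorm (\<lambda>s. Y1 s - Y2 s)"
      by (rule Tstar_nonexp) (rule supnorm_ge[of "\<lambda>s. Y1 s - Y2 s", simplified])
    then show ?thesis unfolding F_def by simp
  qed
  have fx: "F hs = hs" by (rule ext) (simp add: F_def Tstar_h)
  have rec: "W (Suc i) s = W i s / 2 + F (W i) s / 2" for i s
  proof -
    have "V (m + Suc i) s = (1/2) * V (m+i) s + (1/2) * T_opt P r (V (m+i)) s"
      using V_rec[of "m+i"] by simp
    then show ?thesis unfolding W_def F_def TV by (simp add: field_simps)
  qed
  define n where "n = k - m"
  have kmn: "k = m + n" unfolding n_def using mk by simp
  have K1: "supnorm (\<lambda>s. F (W n) s - W n s) \<le> 2 * supnorm (\<lambda>s. W 0 s - hs s) * Bf n n"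
    by (rule KM[where F=F and xs=hs and x=W and n=n, OF ne fx rec])
  have sW0: "supnorm (\<lambda>s. W 0 s - hs s) \<le> D0"
  proof (rule supnorm_le)
    fix s have "W 0 s - hs s = V m s - U m s" unfolding W_def U_def by simp
    then show "\<bar>W 0 s - hs s\<bar> \<le> D0" using dist by simp
  qed
  have Bnn: "Bf n n \<ge> 0" unfolding Bf_diag by simp
  have eq: "(\<lambda>s. T_opt P r (V k) s - V k s - gs s) = (\<lambda>s. F (W n) s - W n s)"
    unfolding kmn by (rule ext) (simp add: TV W_def F_def)
  have "2 * supnorm (\<lambda>s. W 0 s - hs s) * Bf n n \<le> 2 * D0 * Bf n n"
    using sW0 Bnn by (intro mult_right_mono) auto
  then show ?thesis unfolding eq n_def[symmetric] using K1 by linarith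
qed

lemma avg:
  assumes Pg: "\<And>s. P_apply P (pols k) gs s = gs s"
  shows "supnorm (\<lambda>s. gs s - avg_reward P r (pols k) s) \<le> supnorm (\<lambda>s. T_opt P r (V k) s - V k s - gs s)"
proof -
  define A where "A = P_apply P (pols k)"
  define \<delta> where "\<delta> = supnorm (\<lambda>s. T_opt P r (V k) s - V k s - gs s)"
  define e where "e s = T_opt P r (V k) s - V k s - gs s" for s
  define B where "B = supnorm (V k)"
  have pn: "\<And>s b. pols k s b \<ge> 0" and ps: "\<And>s. (\<Sum>b\<in>UNIV. pols k s b) = 1"
    using pol[of k] unfolding is_policy_def by auto
  have A_add: "A (\<lambda>s. f s + g s) = (\<lambda>s. A f s + A g s)" for f g
    unfolding A_def P_apply_def by (rule ext) (simp add: distrib_left sum.distrib)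
  have A_diff: "A (\<lambda>s. f s - g s) = (\<lambda>s. A f s - A g s)" for f g
    unfolding A_def P_apply_def by (rule ext) (simp add: right_diff_distrib sum_subtractf)
  have A_bnd: "\<bar>A f s\<bar> \<le> c" if "\<And>s. \<bar>f s\<bar> \<le> c" for f c s
  proof -
    have "\<bar>A f s\<bar> \<le> (\<Sum>b\<in>UNIV. \<bar>pols k s b * (\<Sum>s'\<in>UNIV. P s b s' * f s')\<bar>)"
      unfolding A_def P_apply_eq by (rule sum_abs)
    also have "\<dots> \<le> (\<Sum>b\<in>UNIV. pols k s b * c)"
      using pn stoch_bound[OF that] by (intro sum_mono) (simp add: abs_mult mult_left_mono)
    also have "\<dots> = c" using ps by (simp add: sum_distrib_right[symmetric])
    finally show ?thesis .
  qed
  have Ap_add: "(A^^t) (\<lambda>s. f s + g s) = (\<lambda>s. (A^^t) f s + (A^^t) g s)" for t f g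
    by (induction t) (simp_all add: A_add)
  have Ap_diff: "(A^^t) (\<lambda>s. f s - g s) = (\<lambda>s. (A^^t) f s - (A^^t) g s)" for t f g
    by (induction t) (simp_all add: A_diff)
  have Ap_bnd: "\<bar>(A^^t) f s\<bar> \<le> c" if "\<And>s. \<bar>f s\<bar> \<le> c" for t f c s
    using that by (induction t arbitrary: s) (simp_all add: A_bnd)
  have Ag: "A gs = gs" unfolding A_def by (rule ext) (rule Pg)
  have Ap_g: "(A^^t) gs = gs" for t by (induction t) (simp_all add: Ag)
  have rp: "r_pol r (pols k) = (\<lambda>s. (gs s + e s) + (V k s - A (V k) s))"
  proof (rule ext)
    fix s
    have "r_pol r (pols k) s + A (V k) s = T_opt P r (V k) s"
      using fun_cong[OF greedy[of k], of s] unfolding T_pol_def A_def .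
    then show "r_pol r (pols k) s = (gs s + e s) + (V k s - A (V k) s)" unfolding e_def by simp
  qed
  have At: "(A^^t) (r_pol r (pols k)) s = gs s + (A^^t) e s + ((A^^t) (V k) s - (A^^Suc t) (V k) s)" for t s
  proof -
    have "(A^^t) (r_pol r (pols k)) s = ((A^^t) gs s + (A^^t) e s) + ((A^^t) (V k) s - (A^^t) (A (V k)) s)"
      unfolding rp Ap_add Ap_diff by simp
    moreover have "(A^^t) (A (V k)) = (A^^Suc t) (V k)" by (simp only: funpow_Suc_right comp_def)
    ultimately show ?thesis by (simp add: Ap_g)
  qed
  have ebnd: "\<bar>e s\<bar> \<le> \<delta>" for s unfolding e_def \<delta>_def by (rule supnorm_ge)
  have Vbnd: "\<bar>V k s\<bar> \<le> B" for s unfolding B_def by (rule supnorm_ge)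
  have Bnn: "B \<ge> 0" unfolding B_def by (rule supnorm_nonneg)
  have dnn: "\<delta> \<ge> 0" unfolding \<delta>_def by (rule supnorm_nonneg)
  show ?thesis
  proof (rule supnorm_le)
    fix s
    define a where "a T = (\<Sum>t<T. (A^^t) (r_pol r (pols k)) s) / real T" for T
    have sumeq: "(\<Sum>t<T. (A^^t) (r_pol r (pols k)) s) = real T * gs s + (\<Sum>t<T. (A^^t) e s) + (V k s - (A^^T) (V k) s)" for T
    proof -
      have "(\<Sum>t<T. (A^^t) (r_pol r (pols k)) s) = (\<Sum>t<T. gs s + (A^^t) e s) + (\<Sum>t<T. (A^^t) (V k) s - (A^^Suc t) (V k) s)"
        unfolding At by (simp add: sum.distrib)
      also have "(\<Sum>t<T. (A^^t) (V k) s - (A^^Suc t) (V k) s) = (A^^0) (V k) s - (A^^T) (V k) s"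
        by (rule sum_lessThan_telescope')
      finally show ?thesis by (simp add: sum.distrib)
    qed
    have bnd: "\<bar>a T - gs s\<bar> \<le> \<delta> + 2 * B / real T" if T: "T > 0" for T
    proof -
      have s1: "\<bar>\<Sum>t<T. (A^^t) e s\<bar> \<le> real T * \<delta>"
      proof -
        have "\<bar>\<Sum>t<T. (A^^t) e s\<bar> \<le> (\<Sum>t<T. \<bar>(A^^t) e s\<bar>)" by (rule sum_abs)
        also have "\<dots> \<le> (\<Sum>t<T. \<delta>)" by (intro sum_mono Ap_bnd ebnd)
        finally show ?thesis by simp
      qed
      have s2: "\<bar>V k s - (A^^T) (V k) s\<bar> \<le> 2 * B"
        using Vbnd[of s] Ap_bnd[of "V k" B T s, OF Vbnd] by (simp add: abs_le_iff) 
      have "a T - gs s = ((\<Sum>t<T. (A^^t) e s) + (V k s - (A^^T) (V k) s)) / real T"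
        unfolding a_def sumeq using T by (simp add: field_simps)
      also have "\<bar>\<dots>\<bar> \<le> (real T * \<delta> + 2 * B) / real T"
      proof -
        have "\<bar>(\<Sum>t<T. (A^^t) e s) + (V k s - (A^^T) (V k) s)\<bar> \<le> real T * \<delta> + 2 * B"
          using s1 s2 abs_triangle_ineq[of "\<Sum>t<T. (A^^t) e s" "V k s - (A^^T) (V k) s"] by linarith
        then show ?thesis unfolding abs_divide using T by (simp add: divide_right_mono)
      qed
      also have "\<dots> = \<delta> + 2 * B / real T" using T by (simp add: field_simps)
      finally show ?thesis .
    qed
    have ev: "eventually (\<lambda>T. gs s - \<delta> - 2 * B / real T \<le> a T \<and> a T \<le> gs s + \<delta> + 2 * B / real T) sequentially"
      using eventually_gt_at_top[of 0]
    proof eventually_elim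
      fix T :: nat assume "T > 0"
      from bnd[OF this] have "a T - gs s \<le> \<delta> + 2 * B / real T" "gs s - a T \<le> \<delta> + 2 * B / real T"
        by (simp_all add: abs_le_iff)
      then show "gs s - \<delta> - 2 * B / real T \<le> a T \<and> a T \<le> gs s + \<delta> + 2 * B / real T" by linarith
    qed
    have lim1: "(\<lambda>T. ereal (gs s - \<delta> - 2 * B / real T)) \<longlonglongrightarrow> ereal (gs s - \<delta>)"
      using tendsto_diff[OF tendsto_const[of "gs s - \<delta>"] lim_const_over_n[of "2 * B"]]
      by (intro tendsto_ereal) simp
    have lim2: "(\<lambda>T. ereal (gs s + \<delta> + 2 * B / real T)) \<longlonglongrightarrow> ereal (gs s + \<delta>)"
      using tendsto_add[OF tendsto_const[of "gs s + \<delta>"] lim_const_over_n[of "2 * B"]]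
      by (intro tendsto_ereal) simp
    define L where "L = liminf (\<lambda>T. ereal (a T))"
    have lo: "ereal (gs s - \<delta>) \<le> L"
    proof -
      have "liminf (\<lambda>T. ereal (gs s - \<delta> - 2 * B / real T)) \<le> L"
        unfolding L_def by (rule Liminf_mono) (use ev in \<open>eventually_elim, simp\<close>)
      moreover have "liminf (\<lambda>T. ereal (gs s - \<delta> - 2 * B / real T)) = ereal (gs s - \<delta>)"
        by (rule lim_imp_Liminf[OF trivial_limit_sequentially lim1])
      ultimately show ?thesis by simp
    qed
    have hi: "L \<le> ereal (gs s + \<delta>)"
    proof -
      have "L \<le> liminf (\<lambda>T. ereal (gs s + \<delta> + 2 * B / real T))"
        unfolding L_def by (rule Liminf_mono) (use ev in \<open>eventually_elim, simp\<close>)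
      moreover have "liminf (\<lambda>T. ereal (gs s + \<delta> + 2 * B / real T)) = ereal (gs s + \<delta>)"
        by (rule lim_imp_Liminf[OF trivial_limit_sequentially lim2])
      ultimately show ?thesis by simp
    qed
    have avg_eq: "avg_reward P r (pols k) s = real_of_ereal L"
      unfolding avg_reward_def L_def a_def A_def by simp
    obtain x where x: "L = ereal x" using lo hi by (cases L) auto
    have "gs s - \<delta> \<le> x" "x \<le> gs s + \<delta>" using lo hi x by auto
    then have "\<bar>gs s - avg_reward P r (pols k) s\<bar> \<le> \<delta>" unfolding avg_eq x by (simp add: abs_le_iff)
    then show "\<bar>gs s - avg_reward P r (pols k) s\<bar> \<le> supnorm (\<lambda>s. T_opt P r (V k) s - V k s - gs s)"
      unfolding \<delta>_def .
  qed
qed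

end

lemma final_bound:
  assumes "D \<ge> 0" "0 < y" "y \<le> real n + 1"
  shows "2 * D * Bf n n \<le> 4 * D / sqrt (pi * y)"
proof -
  have "sqrt (pi * y) \<le> sqrt (pi * (real n + 1))" using assms by (intro real_sqrt_le_mono mult_left_mono) auto
  moreover have "sqrt (pi * y) > 0" using assms by simp
  ultimately have "2 / sqrt (pi * (real n + 1)) \<le> 2 / sqrt (pi * y)"
    by (intro divide_left_mono) auto
  then have "Bf n n \<le> 2 / sqrt (pi * y)" using Bf_bound[of n] by linarith
  then have "2 * D * Bf n n \<le> 2 * D * (2 / sqrt (pi * y))" using assms(1) by (intro mult_left_mono) auto
  then show ?thesis by simp
qed

lemma rnorm_nonneg: "rnorm r \<ge> 0"
proof -
  have "\<bar>r undefined undefined\<bar> \<le> rnorm r" unfolding rnorm_def by (rule Max_ge) auto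
  then show ?thesis by linarith
qed

theorem theorem1:
  fixes P :: "'s::finite \<Rightarrow> 'a::finite \<Rightarrow> 's \<Rightarrow> real"
    and r :: "'s \<Rightarrow> 'a \<Rightarrow> real"
    and gs hs :: "'s \<Rightarrow> real"
    and V :: "nat \<Rightarrow> 's \<Rightarrow> real"
    and pols :: "nat \<Rightarrow> 's \<Rightarrow> 'a \<Rightarrow> real"
    and K :: ereal
  assumes mdp: "is_mdp P"
    and sol: "modified_bellman P r gs hs"
    and V_rec: "\<And>k. V (Suc k) = (\<lambda>s. (1/2) * V k s + (1/2) * T_opt P r (V k) s)"
    and pol: "\<And>k. is_policy (pols k)"
    and greedy: "\<And>k. T_pol P r (pols k) (V k) = T_opt P r (V k)"
    and K_def: "K = ereal (2 * rnorm r + 4 * supnorm (V 0) + 16 * supnorm (\<lambda>s. V 0 s - hs s)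
                       + 2 * supnorm gs) / eps_gap P gs"
  shows "\<forall>k. ereal (real k) > K \<longrightarrow>
     supnorm (\<lambda>s. gs s - avg_reward P r (pols k) s)
       \<le> supnorm (\<lambda>s. T_opt P r (V k) s - V k s - gs s)
   \<and> supnorm (\<lambda>s. T_opt P r (V k) s - V k s - gs s)
       \<le> 4 * supnorm (\<lambda>s. V 0 s - hs s) / sqrt (pi * (real k - real_of_ereal K))"
proof -
  interpret rvi P r gs hs V pols
    using mdp sol V_rec pol greedy by (simp add: rvi_def rvi_axioms_def mdp_ctx_def)
  define c0 where "c0 = 2 * rnorm r + 4 * supnorm (V 0) + 16 * supnorm (\<lambda>s. V 0 s - hs s) + 2 * supnorm gs"
  have D0e: "supnorm (\<lambda>s. V 0 s - hs s) = D0" unfolding D0_def ..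
  have c0D: "c0 \<ge> 16 * D0" unfolding c0_def D0e
    using rnorm_nonneg[of r] supnorm_nonneg[of "V 0"] supnorm_nonneg[of gs] by linarith
  have c0n: "c0 \<ge> 0" using c0D D0_nonneg by linarith
  have K_c: "K = ereal c0 / eps_gap P gs" unfolding K_def c0_def ..
  show ?thesis
  proof (intro allI impI)
    fix k assume kK: "ereal (real k) > K"
    show "supnorm (\<lambda>s. gs s - avg_reward P r (pols k) s)
       \<le> supnorm (\<lambda>s. T_opt P r (V k) s - V k s - gs s)
   \<and> supnorm (\<lambda>s. T_opt P r (V k) s - V k s - gs s)
       \<le> 4 * supnorm (\<lambda>s. V 0 s - hs s) / sqrt (pi * (real k - real_of_ereal K))"
    proof (cases "\<forall>s a. PG s a = gs s")
      case True
      have K0: "K = 0" unfolding K_c using eps_inf True by simp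
      have kpos: "real k > 0" using kK K0 by simp
      have strict: "\<And>s a. PG s a \<noteq> gs s \<Longrightarrow> 4 * D0 < real k * gap s a" using True by simp
      have p1: "supnorm (\<lambda>s. gs s - avg_reward P r (pols k) s)
       \<le> supnorm (\<lambda>s. T_opt P r (V k) s - V k s - gs s)"
        by (rule avg) (rule greedy_Pg[OF strict])
      have G0: "Good 0" unfolding Good_def using True by simp
      have "supnorm (\<lambda>s. T_opt P r (V k) s - V k s - gs s) \<le> 2 * D0 * Bf (k - 0) (k - 0)"
        by (rule rate[OF G0]) simp
      also have "\<dots> \<le> 4 * D0 / sqrt (pi * (real k - real_of_ereal K))"
        using K0 kpos D0_nonneg by (intro final_bound) auto
      finally show ?thesis using p1 unfolding D0e by simp
    next
      case False
      then obtain s0 a0 where sa0: "PG s0 a0 \<noteq> gs s0" by blast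
      obtain e where e: "e > 0" "eps_gap P gs = ereal e" "\<And>s a. PG s a \<noteq> gs s \<Longrightarrow> e \<le> gap s a"
        using eps_fin[OF sa0] by blast
      have Ke: "K = ereal (c0 / e)" unfolding K_c e(2) using e(1) by simp
      have Kr: "real_of_ereal K = c0 / e" unfolding Ke by simp
      have kgt: "real k > c0 / e" using kK Ke by simp
      then have ke: "real k * e > c0" using e(1) by (simp add: field_simps)
      have strict: "4 * D0 < real k * gap s a" if bad: "PG s a \<noteq> gs s" for s a
      proof -
        have "real k * e \<le> real k * gap s a" using e(3)[OF bad] by (intro mult_left_mono) auto
        then show ?thesis using ke c0D D0_nonneg by linarith
      qed
      have p1: "supnorm (\<lambda>s. gs s - avg_reward P r (pols k) s)
       \<le> supnorm (\<lambda>s. T_opt P r (V k) s - V k s - gs s)"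
        by (rule avg) (rule greedy_Pg[OF strict])
      have Gk: "Good k" unfolding Good_def using strict less_imp_le by blast
      define m where "m = (LEAST j. Good j)"
      have Gm: "Good m" unfolding m_def using Gk by (rule LeastI)
      have mk: "m \<le> k" unfolding m_def using Gk by (rule Least_le)
      have mK: "real m \<le> c0 / e + 1"
      proof (cases m)
        case 0 then show ?thesis using c0n e(1) by simp
      next
        case (Suc j)
        have "\<not> Good j" using not_less_Least[of j "\<lambda>j. Good j"] unfolding m_def[symmetric] Suc by simp
        then obtain s a where bad: "PG s a \<noteq> gs s" and lt: "real j * gap s a < 4 * D0"
          unfolding Good_def by force
        have "real j * e \<le> real j * gap s a" using e(3)[OF bad] by (intro mult_left_mono) auto
        then have "real j * e < c0" using lt c0D D0_nonneg by linarith
        then have "real j < c0 / e" using e(1) by (simp add: field_simps)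
        then show ?thesis unfolding Suc by simp
      qed
      have "supnorm (\<lambda>s. T_opt P r (V k) s - V k s - gs s) \<le> 2 * D0 * Bf (k - m) (k - m)"
        by (rule rate[OF Gm mk])
      also have "\<dots> \<le> 4 * D0 / sqrt (pi * (real k - real_of_ereal K))"
      proof (rule final_bound)
        show "0 \<le> D0" by (rule D0_nonneg)
        show "0 < real k - real_of_ereal K" using kgt Kr by simp
        show "real k - real_of_ereal K \<le> real (k - m) + 1" using mK mk Kr by (simp add: of_nat_diff)
      qed
      finally show ?thesis using p1 unfolding D0e by simp
    qed
  qed
qed

end
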